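(* Let $\mathbf{x}_1,\dots,\mathbf{x}_r\in\mathbb{R}^d$ be fixed design points, $\mathbb{C}\subseteq\mathbb{R}^r$ the set of convex vectors on these points, and consider the Bayesian model in the context (known or unknown covariance). For $n\ge 0$ and $\ell\ge 1$, let $\phi_n$ and $\phi_{n+\ell}$ denote the posterior (marginal) densities of $\mathbf{F}\mid\mathscr{A}_n$ and $\mathbf{F}\mid\mathscr{A}_{n+\ell}$, and let $L_{n+\ell,n}(\mathbf{y})=\phi_{n+\ell}(\mathbf{y})/\phi_n(\mathbf{y})$. Let $\mathbf{Y}_n$ be a sample drawn from the density $\phi_n$ (independently of the observations $\mathbf{Y}_{n+1},\dots,\mathbf{Y}_{n+\ell}$ given $\mathscr{A}_n$). Then the estimator $\hat p_{n+\ell}=\mathbf{1}\{\mathbf{Y}_n\in\mathbb{C}\}\,L_{n+\ell,n}(\mathbf{Y}_n)$ satisfies, conditional on $\mathscr{A}_{n+\ell}$, $E[\hat p_{n+\ell}\mid\mathscr{A}_{n+\ell}]=P(\mathbf{F}\in\mathbb{C}\mid\mathscr{A}_{n+\ell})$ and $\mathrm{Var}(\hat p_{n+\ell}\mid\mathscr{A}_{n+\ell})<\infty$.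
   Context: A vector $\mathbf{g}\in\mathbb{R}^r$ is called convex (on $\mathbf{x}_1,\dots,\mathbf{x}_r$) if there exists a convex function $f:\mathbb{R}^d\to\mathbb{R}$ with $f(\mathbf{x}_i)=g_i$ for $i=1,\dots,r$; $\mathbb{C}$ denotes the set of all such vectors. Bayesian model: $\mathbf{F}$ is an $\mathbb{R}^r$-valued random vector drawn from a prior; observations are $\mathbf{Y}_j=\mathbf{F}+\boldsymbol{\xi}_j$, $j=1,2,\dots$, with $\boldsymbol{\xi}_j$ i.i.d. $N(\mathbf{0},\Gamma)$ independent of $\mathbf{F}$, $\Gamma$ positive definite. $\mathscr{A}_n$ is the $\sigma$-field generated by the initial information $\mathscr{A}_0$ and $\mathbf{Y}_1,\dots,\mathbf{Y}_n$. Known-covariance model: $\Gamma$ known, prior $\mathbf{F}\sim N(\boldsymbol{\mu}_0,\Lambda_0)$ with $\Lambda_0$ positive definite, posterior $N(\boldsymbol{\mu}_n,\Lambda_n)$ with $\Lambda_n^{-1}=\Lambda_{n-1}^{-1}+\Gamma^{-1}$, $\boldsymbol{\mu}_n=\Lambda_n(\Lambda_{n-1}^{-1}\boldsymbol{\mu}_{n-1}+\Gamma^{-1}\mathbf{Y}_n)$. Unknown-covariance model: normal–inverse-Wishart prior $\Gamma\sim\text{Inv-Wishart}_{\upsilon_0}(\Xi_0^{-1})$, $\mathbf{F}\mid\Gamma\sim N(\boldsymbol{\mu}_0,\Gamma/\kappa_0)$, with updates $\boldsymbol{\mu}_n=\frac{\kappa_{n-1}\boldsymbol{\mu}_{n-1}+\mathbf{Y}_n}{\kappa_{n-1}+1}$,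 $\kappa_n=\kappa_{n-1}+1$, $\upsilon_n=\upsilon_{n-1}+1$, $\Xi_n=\Xi_{n-1}+\frac{\kappa_{n-1}}{\kappa_{n-1}+1}(\mathbf{Y}_n-\boldsymbol{\mu}_{n-1})(\mathbf{Y}_n-\boldsymbol{\mu}_{n-1})^T$; the marginal posterior density of $\mathbf{F}$ is multivariate Student-$t$ with $\upsilon_n-r+1$ degrees of freedom, location $\boldsymbol{\mu}_n$ and scale matrix $\Xi_n/(\kappa_n(\upsilon_n-r+1))$. *)

theory Defs
  imports "HOL-Probability.Probability"
begin

definition convex_vectors :: "('r::finite \<Rightarrow> real^'d) \<Rightarrow> (real^'r) set" where
  "convex_vectors xs = {g. \<exists>f::real^'d \<Rightarrow> real. convex_on UNIV f \<and> (\<forall>i. f (xs i) = g $ i)}"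

definition pos_def_mat :: "real^'r^'r \<Rightarrow> bool" where
  "pos_def_mat A \<longleftrightarrow> transpose A = A \<and> (\<forall>x. x \<noteq> 0 \<longrightarrow> x \<bullet> (A *v x) > 0)"

definition outer_prod :: "real^'r \<Rightarrow> real^'r \<Rightarrow> real^'r^'r" where
  "outer_prod u v = (\<chi> i j. u $ i * v $ j)"

definition gauss_density :: "real^'r::finite \<Rightarrow> real^'r^'r \<Rightarrow> real^'r \<Rightarrow> real" where
  "gauss_density mu Sig y =
     (2 * pi) powr (- real CARD('r) / 2) * det Sig powr (-1/2)
     * exp (- (1/2) * ((y - mu) \<bullet> (matrix_inv Sig *v (y - mu))))"

definition student_t_density :: "real \<Rightarrow> real^'r::finite \<Rightarrow> real^'r^'r \<Rightarrow> real^'r \<Rightarrow> real" where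
  "student_t_density nu mu Sig y =
     Gamma ((nu + real CARD('r)) / 2)
     / (Gamma (nu / 2) * (nu * pi) powr (real CARD('r) / 2) * det Sig powr (1/2))
     * (1 + (1/nu) * ((y - mu) \<bullet> (matrix_inv Sig *v (y - mu)))) powr (- (nu + real CARD('r)) / 2)"

text \<open>Known-covariance model: posterior parameters (mu_n, Lambda_n) after observations Y 1, ..., Y n.\<close>
fun known_post :: "real^'r^'r \<Rightarrow> real^'r \<Rightarrow> real^'r^'r \<Rightarrow> (nat \<Rightarrow> real^'r) \<Rightarrow> nat
                     \<Rightarrow> (real^'r) \<times> (real^'r^'r)" where
  "known_post Gam mu0 Lam0 Y 0 = (mu0, Lam0)"
| "known_post Gam mu0 Lam0 Y (Suc k) =
     (let (mu, Lam) = known_post Gam mu0 Lam0 Y k;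
          Lam' = matrix_inv (matrix_inv Lam + matrix_inv Gam)
      in (Lam' *v (matrix_inv Lam *v mu + matrix_inv Gam *v Y (Suc k)), Lam'))"

fun unknown_post :: "real^'r \<Rightarrow> real \<Rightarrow> real \<Rightarrow> real^'r^'r \<Rightarrow> (nat \<Rightarrow> real^'r) \<Rightarrow> nat
                       \<Rightarrow> (real^'r) \<times> real \<times> real \<times> (real^'r^'r)" where
  "unknown_post mu0 ka0 up0 Xi0 Y 0 = (mu0, ka0, up0, Xi0)"
| "unknown_post mu0 ka0 up0 Xi0 Y (Suc k) =
     (let (mu, ka, up, Xi) = unknown_post mu0 ka0 up0 Xi0 Y k
      in ((1 / (ka + 1)) *\<^sub>R (ka *\<^sub>R mu + Y (Suc k)), ka + 1, up + 1,
          Xi + (ka / (ka + 1)) *\<^sub>R outer_prod (Y (Suc k) - mu) (Y (Suc k) - mu)))"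

definition unknown_post_density :: "real^'r \<Rightarrow> real \<Rightarrow> real \<Rightarrow> real^'r^'r \<Rightarrow> (nat \<Rightarrow> real^'r) \<Rightarrow> nat
                                      \<Rightarrow> real^'r::finite \<Rightarrow> real" where
  "unknown_post_density mu0 ka0 up0 Xi0 Y n =
     (case unknown_post mu0 ka0 up0 Xi0 Y n of (mu, ka, up, Xi) \<Rightarrow>
        student_t_density (up - real CARD('r) + 1) mu
          ((1 / (ka * (up - real CARD('r) + 1))) *\<^sub>R Xi))"

definition known_post_density :: "real^'r^'r \<Rightarrow> real^'r \<Rightarrow> real^'r^'r \<Rightarrow> (nat \<Rightarrow> real^'r) \<Rightarrow> nat
                                    \<Rightarrow> real^'r::finite \<Rightarrow> real" where
  "known_post_density Gam mu0 Lam0 Y n =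
     (case known_post Gam mu0 Lam0 Y n of (mu, Lam) \<Rightarrow> gauss_density mu Lam)"

definition is_estimator :: "'b set \<Rightarrow> ('b \<Rightarrow> real) \<Rightarrow> ('b \<Rightarrow> real) \<Rightarrow> 'b \<Rightarrow> real" where
  "is_estimator C phi_n phi_nl z = indicator C z * (phi_nl z / phi_n z)"

end

theory Submission
  imports Defs
begin
lemma subgrad:
  fixes f :: "real^'d \<Rightarrow> real" and x0 :: "real^'d"
  assumes cf: "convex_on UNIV f"
  shows "\<exists>s. \<forall>z. f x0 + s \<bullet> (z - x0) \<le> f z"
proof -
  let ?S = "{(x0, f x0)} :: ((real^'d) \<times> real) set"
  let ?T = "{p :: (real^'d) \<times> real. f (fst p) < snd p}"
  have cT: "convex ?T"
    unfolding convex_def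
  proof (intro ballI allI impI)
    fix p q :: "(real^'d) \<times> real" and u v :: real
    assume hp: "p \<in> ?T" "q \<in> ?T" and h: "0 \<le> u" "0 \<le> v" "u + v = 1"
    obtain a s where p: "p = (a, s)" by (cases p)
    obtain b t where q: "q = (b, t)" by (cases q)
    have fa: "f a < s" "f b < t" using hp p q by auto
    have 1: "f (u *\<^sub>R a + v *\<^sub>R b) \<le> u * f a + v * f b"
      using cf h by (simp add: convex_on_def)
    have 2: "u * f a + v * f b < u * s + v * t"
    proof (cases "u = 0")
      case True then show ?thesis using h fa by simp
    next
      case False then have "u > 0" using h by simp
      then have "u * f a < u * s" using fa by simp
      moreover have "v * f b \<le> v * t" using h fa by (intro mult_left_mono) auto
      ultimately show ?thesis by linarith
    qed
    show "u *\<^sub>R p + v *\<^sub>R q \<in> ?T"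
      using 1 2 p q by simp
  qed
  have ne: "?T \<noteq> {}"
  proof -
    have "(x0, f x0 + 1) \<in> ?T" by simp
    then show ?thesis by blast
  qed
  have dj: "?S \<inter> ?T = {}" by auto
  obtain a b where ab: "a \<noteq> 0" "\<forall>x\<in>?S. a \<bullet> x \<le> b" "\<forall>x\<in>?T. b \<le> a \<bullet> x"
    using separating_hyperplane_sets[OF convex_singleton cT _ ne dj] by blast
  obtain w c where wc: "a = (w, c)" by (cases a)
  have key: "w \<bullet> x0 + c * f x0 \<le> w \<bullet> z + c * t" if "f z < t" for z t
    using ab wc that by (force simp: inner_Pair)
  have c0: "c \<ge> 0"
  proof (rule ccontr)
    assume "\<not> c \<ge> 0"
    then have "c < 0" by simp
    have "w \<bullet> x0 + c * f x0 \<le> w \<bullet> x0 + c * (f x0 + 1)" by (rule key) simp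
    then show False using \<open>c < 0\<close> by (simp add: algebra_simps)
  qed
  have cpos: "c > 0"
  proof (rule ccontr)
    assume "\<not> c > 0"
    then have "c = 0" using c0 by simp
    then have "w \<noteq> 0" using ab wc by (auto simp: zero_prod_def)
    have "w \<bullet> x0 \<le> w \<bullet> (x0 - w)" using key[of "x0 - w" "f (x0 - w) + 1"] \<open>c = 0\<close> by simp
    then have "w \<bullet> w \<le> 0" by (simp add: inner_diff_right)
    then show False using \<open>w \<noteq> 0\<close> by (metis inner_eq_zero_iff inner_ge_zero order_antisym)
  qed
  show ?thesis
  proof (intro exI allI)
    fix z
    show "f x0 + (- (1/c) *\<^sub>R w) \<bullet> (z - x0) \<le> f z"
    proof (rule ccontr)
      assume "\<not> ?thesis"
      then have lt: "f z < f x0 + (- (1/c) *\<^sub>R w) \<bullet> (z - x0)" by simp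
      define t where "t = (f z + (f x0 + (- (1/c) *\<^sub>R w) \<bullet> (z - x0))) / 2"
      have "f z < t" using lt by (simp add: t_def)
      from key[OF this] have "w \<bullet> x0 + c * f x0 \<le> w \<bullet> z + c * t" .
      then have "f x0 + (- (1/c) *\<^sub>R w) \<bullet> (z - x0) \<le> t"
        using cpos by (simp add: inner_diff_right field_simps)
      moreover have aux: "\<And>A B::real. A \<le> (B + A) / 2 \<Longrightarrow> B < A \<Longrightarrow> False" by (auto simp: field_simps)
      ultimately show False using lt unfolding t_def by blast
    qed
  qed
qed

definition EM :: "('r::finite \<Rightarrow> real^'d) \<Rightarrow> nat \<Rightarrow> (real^'r) set" where
  "EM xs M = {g. \<exists>S. S \<in> cball (0::(real^'d)^'r) (real M) \<and>
      (g, S) \<in> {p. \<forall>i j. fst p $ i + (snd p $ i) \<bullet> (xs j - xs i) \<le> fst p $ j}}"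

lemma closed_EM:
  fixes xs :: "'r::finite \<Rightarrow> real^'d"
  shows "closed (EM xs M)"
proof -
  have "closed {p :: (real^'r) \<times> ((real^'d)^'r). \<forall>i j. fst p $ i + (snd p $ i) \<bullet> (xs j - xs i) \<le> fst p $ j}"
    by (intro closed_Collect_all closed_Collect_le continuous_intros)
  then have "closed {y. \<exists>x. x \<in> cball (0::(real^'d)^'r) (real M) \<and> (x, y) \<in> 
     (\<lambda>p. (snd p, fst p)) ` {p :: (real^'r) \<times> ((real^'d)^'r). \<forall>i j. fst p $ i + (snd p $ i) \<bullet> (xs j - xs i) \<le> fst p $ j}}"
    by (intro closed_compact_projection compact_cball closed_injective_linear_image) (auto simp: linear_iff inj_on_def)
  moreover have "EM xs M = {y. \<exists>x. x \<in> cball (0::(real^'d)^'r) (real M) \<and> (x, y) \<in> 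
     (\<lambda>p. (snd p, fst p)) ` {p :: (real^'r) \<times> ((real^'d)^'r). \<forall>i j. fst p $ i + (snd p $ i) \<bullet> (xs j - xs i) \<le> fst p $ j}}"
    unfolding EM_def by (auto simp: image_iff)
  ultimately show ?thesis by simp
qed

lemma max_affine_convex:
  fixes c :: "'r::finite \<Rightarrow> real" and S :: "'r \<Rightarrow> real^'d" and p :: "'r \<Rightarrow> real^'d"
  shows "convex_on UNIV (\<lambda>x. Max (range (\<lambda>i. c i + S i \<bullet> (x - p i))))"
proof (rule convex_onI)
  fix t :: real and x y :: "real^'d"
  assume t: "0 < t" "t < 1"
  let ?F = "\<lambda>x. Max (range (\<lambda>i. c i + S i \<bullet> (x - p i)))"
  have "c i + S i \<bullet> ((1 - t) *\<^sub>R x + t *\<^sub>R y - p i) \<le> (1 - t) * ?F x + t * ?F y" for i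
  proof -
    have e: "c i + S i \<bullet> ((1 - t) *\<^sub>R x + t *\<^sub>R y - p i) = (1 - t) * (c i + S i \<bullet> (x - p i)) + t * (c i + S i \<bullet> (y - p i))"
      by (simp add: inner_diff_right inner_add_right algebra_simps)
    have "c i + S i \<bullet> (x - p i) \<le> ?F x" by (rule Max_ge) auto
    moreover have "c i + S i \<bullet> (y - p i) \<le> ?F y" by (rule Max_ge) auto
    ultimately show ?thesis unfolding e using t
      by (intro add_mono mult_left_mono) auto
  qed
  then show "?F ((1 - t) *\<^sub>R x + t *\<^sub>R y) \<le> (1 - t) * ?F x + t * ?F y"
    by (subst Max_le_iff) auto
qed auto

lemma convex_vectors_eq:
  fixes xs :: "'r::finite \<Rightarrow> real^'d"
  shows "convex_vectors xs = (\<Union>M. EM xs M)"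
proof
  show "convex_vectors xs \<subseteq> (\<Union>M. EM xs M)"
  proof
    fix g assume "g \<in> convex_vectors xs"
    then obtain f where f: "convex_on UNIV f" "\<And>i. f (xs i) = g $ i"
      unfolding convex_vectors_def by auto
    have "\<forall>i. \<exists>s. \<forall>z. f (xs i) + s \<bullet> (z - xs i) \<le> f z"
      using subgrad[OF f(1)] by blast
    then obtain s where s: "\<And>i z. f (xs i) + s i \<bullet> (z - xs i) \<le> f z"
      by metis
    define S where "S = (\<chi> i. s i)"
    have ns: "norm S \<le> real (nat \<lceil>norm S\<rceil>)"
      by (simp add: real_nat_ceiling_ge)
    moreover have "\<forall>i j. g $ i + (S $ i) \<bullet> (xs j - xs i) \<le> g $ j"
      using s f(2) unfolding S_def by (metis vec_lambda_beta)
    then have "g \<in> EM xs (nat \<lceil>norm S\<rceil>)" unfolding EM_def using ns by (auto intro!: exI[of _ S])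
    then show "g \<in> (\<Union>M. EM xs M)" by blast
  qed
next
  show "(\<Union>M. EM xs M) \<subseteq> convex_vectors xs"
  proof
    fix g assume "g \<in> (\<Union>M. EM xs M)"
    then obtain S :: "(real^'d)^'r" where S: "\<And>i j. g $ i + (S $ i) \<bullet> (xs j - xs i) \<le> g $ j"
      unfolding EM_def by auto
    define f where "f = (\<lambda>x. Max (range (\<lambda>i. g $ i + S $ i \<bullet> (x - xs i))))"
    have "convex_on UNIV f" unfolding f_def by (rule max_affine_convex)
    moreover have "f (xs j) = g $ j" for j
      unfolding f_def
    proof (rule antisym)
      show "Max (range (\<lambda>i. g $ i + S $ i \<bullet> (xs j - xs i))) \<le> g $ j"
        using S by (subst Max_le_iff) auto
      show "g $ j \<le> Max (range (\<lambda>i. g $ i + S $ i \<bullet> (xs j - xs i)))"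
        by (rule Max_ge) (auto intro: image_eqI[where x=j])
    qed
    ultimately show "g \<in> convex_vectors xs" unfolding convex_vectors_def by auto
  qed
qed

lemma convex_vectors_borel: "convex_vectors xs \<in> sets borel"
  unfolding convex_vectors_eq
  by (intro sets.countable_UN) (auto intro: borel_closed closed_EM)



lemma abs_le_sq: "\<bar>x::real\<bar> \<le> 1 + x\<^sup>2"
proof (cases "\<bar>x\<bar> \<le> 1")
  case True then show ?thesis by (simp add: add_increasing2)
next
  case False
  then have "1 * \<bar>x\<bar> \<le> \<bar>x\<bar> * \<bar>x\<bar>" by (intro mult_right_mono) auto
  then show ?thesis by (simp add: power2_eq_square)
qed

lemma generic_est:
  fixes M :: "'a measure" and Z :: "'a \<Rightarrow> real^'r::finite"
  assumes P: "prob_space M"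
    and D: "distributed M lborel Z (\<lambda>y. ennreal (\<phi> y))"
    and phipos: "\<And>y. \<phi> y > 0"
    and C: "C \<in> sets borel"
    and psim: "\<psi> \<in> borel_measurable borel"
    and psinn: "\<And>y. \<psi> y \<ge> 0"
    and I: "integrable lborel (\<lambda>y. (\<psi> y)\<^sup>2 / \<phi> y)"
  shows "let p = (\<lambda>\<omega>. is_estimator C \<phi> \<psi> (Z \<omega>))
        in integrable M p \<and>
           (\<integral>\<omega>. p \<omega> \<partial>M) = measure (density lborel (\<lambda>y. ennreal (\<psi> y))) C \<and>
           integrable M (\<lambda>\<omega>. (p \<omega>)\<^sup>2)"
proof -
  interpret prob_space M by (rule P)
  have phim: "\<phi> \<in> borel_measurable lborel"
    using distributed_real_measurable[OF _ D] phipos by (simp add: less_imp_le)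
  have Zm: "Z \<in> measurable M lborel" using D by (simp add: distributed_def)
  define g where "g = (\<lambda>y. indicator C y * (\<psi> y / \<phi> y))"
  have gm: "g \<in> borel_measurable lborel"
    unfolding g_def using phim psim C by measurable
  have p_eq: "(\<lambda>\<omega>. is_estimator C \<phi> \<psi> (Z \<omega>)) = (\<lambda>\<omega>. g (Z \<omega>))"
    by (simp add: is_estimator_def g_def)
  have e2: "\<phi> y * (g y)\<^sup>2 = indicator C y * ((\<psi> y)\<^sup>2 / \<phi> y)" for y
  proof -
    have "\<phi> y \<noteq> 0" using phipos[of y] by simp
    then show ?thesis by (cases "y \<in> C") (simp_all add: g_def power2_eq_square)
  qed
  have "integrable lborel (\<lambda>y. \<phi> y * (g y)\<^sup>2)"
    unfolding e2 using integrable_real_mult_indicator[of C lborel, OF _ I] C by (simp add: mult.commute)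
  then have I2: "integrable M (\<lambda>\<omega>. (g (Z \<omega>))\<^sup>2)"
    using distributed_integrable[OF D, of "\<lambda>y. (g y)\<^sup>2"] gm phipos
    by (simp add: less_imp_le)
  have gZm: "(\<lambda>\<omega>. g (Z \<omega>)) \<in> borel_measurable M"
    using gm Zm by measurable
  have I1: "integrable M (\<lambda>\<omega>. g (Z \<omega>))"
  proof (rule Bochner_Integration.integrable_bound[of _ "\<lambda>\<omega>. 1 + (g (Z \<omega>))\<^sup>2"])
    show "integrable M (\<lambda>\<omega>. 1 + (g (Z \<omega>))\<^sup>2)" using I2 by simp
    show "AE \<omega> in M. norm (g (Z \<omega>)) \<le> norm (1 + (g (Z \<omega>))\<^sup>2)"
    proof (rule AE_I2)
      fix \<omega>
      have "\<bar>g (Z \<omega>)\<bar> \<le> 1 + (g (Z \<omega>))\<^sup>2" by (rule abs_le_sq)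
      then show "norm (g (Z \<omega>)) \<le> norm (1 + (g (Z \<omega>))\<^sup>2)" by simp
    qed
  qed (rule gZm)
  have e1: "\<phi> y * g y = indicator C y * \<psi> y" for y
    using phipos[of y] by (simp add: g_def indicator_def)
  have Ipsi: "integrable lborel (\<lambda>y. indicator C y * \<psi> y)"
    using distributed_integrable[OF D gm] I1 phipos by (simp add: less_imp_le e1)
  have "(\<integral>\<omega>. g (Z \<omega>) \<partial>M) = (\<integral>y. \<phi> y * g y \<partial>lborel)"
    using distributed_integral[OF D gm] phipos by (simp add: less_imp_le)
  also have "\<dots> = (\<integral>y. indicator C y * \<psi> y \<partial>lborel)" by (simp add: e1)
  also have "\<dots> = enn2real (\<integral>\<^sup>+ y. ennreal (indicator C y * \<psi> y) \<partial>lborel)"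
    using C psim psinn by (intro integral_eq_nn_integral) auto
  also have "\<dots> = measure (density lborel (\<lambda>y. ennreal (\<psi> y))) C"
    unfolding measure_def using C psim
    by (simp add: emeasure_density nn_integral_set_ennreal mult.commute)
  finally show ?thesis using I1 I2 unfolding p_eq Let_def by simp
qed



definition qpos :: "real^'r^'r \<Rightarrow> bool" where
  "qpos A \<longleftrightarrow> (\<forall>x. x \<noteq> 0 \<longrightarrow> 0 < x \<bullet> (A *v x))"

definition qpsd :: "real^'r^'r \<Rightarrow> bool" where
  "qpsd A \<longleftrightarrow> (\<forall>x. 0 \<le> x \<bullet> (A *v x))"

lemma qpos_psd: "qpos A \<Longrightarrow> qpsd A"
  unfolding qpos_def qpsd_def by (metis inner_zero_left less_eq_real_def)

lemma pos_def_qpos: "pos_def_mat A \<Longrightarrow> qpos A"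
  unfolding pos_def_mat_def qpos_def by auto

lemma mv_scale: "(A::real^'r^'r) *v (c *\<^sub>R x) = c *\<^sub>R (A *v x)"
  by (simp add: linear_scale)

lemma qpos_invertible:
  fixes A :: "real^'r^'r"
  assumes "qpos A" shows "invertible A"
proof -
  have "\<forall>x. A *v x = 0 \<longrightarrow> x = 0"
    using assms unfolding qpos_def by (metis inner_zero_right less_irrefl)
  then show ?thesis
    unfolding invertible_left_inverse matrix_left_invertible_ker .
qed

lemma inv_props:
  fixes A :: "real^'r^'r"
  assumes "invertible A"
  shows "A ** matrix_inv A = mat 1" "matrix_inv A ** A = mat 1"
  using someI_ex[OF assms[unfolded invertible_def]] unfolding matrix_inv_def by auto

lemma qpos_inv:
  fixes A :: "real^'r^'r"
  assumes "qpos A" shows "qpos (matrix_inv A)"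
  unfolding qpos_def
proof (intro allI impI)
  fix x :: "real^'r" assume x: "x \<noteq> 0"
  define w where "w = matrix_inv A *v x"
  have Aw: "A *v w = x"
    unfolding w_def using inv_props[OF qpos_invertible[OF assms]]
    by (simp add: matrix_vector_mul_assoc)
  then have "w \<noteq> 0" using x by auto
  then have "0 < w \<bullet> (A *v w)" using assms unfolding qpos_def by auto
  moreover have "x \<bullet> (matrix_inv A *v x) = (A *v w) \<bullet> w" using Aw w_def by simp
  ultimately show "0 < x \<bullet> (matrix_inv A *v x)" by (simp add: inner_commute)
qed

lemma qpos_add: "qpos A \<Longrightarrow> qpsd B \<Longrightarrow> qpos (A + B)"
  unfolding qpos_def qpsd_def by (simp add: matrix_vector_mult_add_rdistrib inner_add_right add_pos_nonneg)

lemma qpsd_add: "qpsd A \<Longrightarrow> qpsd B \<Longrightarrow> qpsd (A + B)"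
  unfolding qpsd_def by (simp add: matrix_vector_mult_add_rdistrib inner_add_right add_nonneg_nonneg)

lemma mat_scaleR_mv: "((c::real) *\<^sub>R (A::real^'r^'r)) *v x = c *\<^sub>R (A *v x)"
  by (simp add: vec_eq_iff matrix_vector_mult_def sum_distrib_left algebra_simps)

lemma qpos_scale: "qpos A \<Longrightarrow> (c::real) > 0 \<Longrightarrow> qpos (c *\<^sub>R A)"
  unfolding qpos_def by (simp add: mat_scaleR_mv)

lemma qpsd_scale: "qpsd A \<Longrightarrow> (c::real) \<ge> 0 \<Longrightarrow> qpsd (c *\<^sub>R A)"
  unfolding qpsd_def by (simp add: mat_scaleR_mv)

lemma qpsd_outer: "qpsd (outer_prod (v::real^'r) v)"
proof -
  have "x \<bullet> (outer_prod v v *v x) = (v \<bullet> x)\<^sup>2" for x :: "real^'r"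
    by (simp add: outer_prod_def matrix_vector_mult_def inner_vec_def power2_eq_square
                  sum_distrib_left sum_distrib_right algebra_simps)
  then show ?thesis unfolding qpsd_def by simp
qed

lemma inv_inv:
  fixes S :: "real^'r^'r"
  assumes "invertible S" shows "matrix_inv (matrix_inv S) = S"
proof -
  have iS: "invertible (matrix_inv S)"
    using inv_props[OF assms] unfolding invertible_def by blast
  have "matrix_inv (matrix_inv S) = matrix_inv (matrix_inv S) ** (matrix_inv S ** S)"
    using inv_props[OF assms] by simp
  also have "\<dots> = (matrix_inv (matrix_inv S) ** matrix_inv S) ** S"
    by (simp add: matrix_mul_assoc)
  also have "\<dots> = S" using inv_props[OF iS] by simp
  finally show ?thesis .
qed

lemma qpos_lower:
  fixes A :: "real^'r^'r"
  assumes "qpos A"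
  shows "\<exists>d>0. \<forall>x. d * (norm x)\<^sup>2 \<le> x \<bullet> (A *v x)"
proof -
  have "\<exists>u\<in>sphere (0::real^'r) 1. \<forall>y\<in>sphere 0 1. u \<bullet> (A *v u) \<le> y \<bullet> (A *v y)"
    by (intro continuous_attains_inf compact_sphere continuous_intros) auto
  then obtain u where u: "norm u = 1" "\<And>y. norm y = 1 \<Longrightarrow> u \<bullet> (A *v u) \<le> y \<bullet> (A *v y)"
    by auto
  have "u \<noteq> 0" using u by auto
  then have d: "0 < u \<bullet> (A *v u)" using assms unfolding qpos_def by auto
  have "u \<bullet> (A *v u) * (norm x)\<^sup>2 \<le> x \<bullet> (A *v x)" for x
  proof (cases "x = 0")
    case True then show ?thesis by simp
  next
    case False
    define y where "y = (1 / norm x) *\<^sub>R x"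
    have ny: "norm y = 1" using False by (simp add: y_def)
    have xy: "x = norm x *\<^sub>R y" using False by (simp add: y_def)
    have "x \<bullet> (A *v x) = (norm x)\<^sup>2 * (y \<bullet> (A *v y))"
      by (subst (1 2) xy) (simp add: mv_scale power2_eq_square)
    moreover have "u \<bullet> (A *v u) * (norm x)\<^sup>2 \<le> (y \<bullet> (A *v y)) * (norm x)\<^sup>2"
      using u(2)[OF ny] by (rule mult_right_mono) simp
    ultimately show ?thesis by (simp add: mult.commute)
  qed
  then show ?thesis using d by blast
qed

lemma quad_upper:
  fixes A :: "real^'r^'r"
  shows "\<exists>K>0. \<forall>x. \<bar>x \<bullet> (A *v x)\<bar> \<le> K * (norm x)\<^sup>2"
proof -
  obtain K where K: "K > 0" "\<And>x. norm (A *v x) \<le> norm x * K"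
    using bounded_linear.pos_bounded[OF matrix_vector_mul_bounded_linear[of A]] by blast
  have "\<bar>x \<bullet> (A *v x)\<bar> \<le> K * (norm x)\<^sup>2" for x
  proof -
    have "\<bar>x \<bullet> (A *v x)\<bar> \<le> norm x * norm (A *v x)" by (rule Cauchy_Schwarz_ineq2)
    also have "\<dots> \<le> norm x * (norm x * K)" by (intro mult_left_mono K(2)) auto
    finally show ?thesis by (simp add: power2_eq_square mult_ac)
  qed
  then show ?thesis using K by blast
qed



lemma integrable_powr_tail:
  fixes e :: real assumes e: "e < -1"
  shows "integrable lborel (\<lambda>t. indicator {1..} t * t powr e)"
proof -
  have "(\<lambda>t. t powr e) integrable_on {1..}"
    by (rule has_integral_integrable[OF has_integral_powr_to_inf[OF e]]) simp
  then have "integrable lebesgue (\<lambda>t. indicator {1..} t *\<^sub>R t powr e)"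
    by (intro nonnegative_absolutely_integrable_1 [unfolded set_integrable_def]) auto
  then have "integrable lebesgue (\<lambda>t. indicator {1..} t * t powr e)" by simp
  moreover have "(\<lambda>t. indicator {1..} t * t powr e) \<in> borel_measurable borel"
    by measurable
  ultimately show ?thesis
    using integrable_completion[of "\<lambda>t. indicator {1..} t * t powr e" lborel] by simp
qed

lemma integrable_1d:
  fixes a :: real assumes a: "a > 1/2"
  shows "integrable lborel (\<lambda>t::real. (1 + t\<^sup>2) powr (- a))"
proof -
  define k where "k = (\<lambda>t::real. indicator {1..} t * t powr (- 2 * a))"
  have k: "integrable lborel k" unfolding k_def using a by (intro integrable_powr_tail) auto
  have km: "integrable lborel (\<lambda>t. k (0 + (-1) * t))"
    using lborel_integrable_real_affine_iff[of "-1" k 0] k by simp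
  have ind: "integrable lborel (indicator {-1..1::real} :: real \<Rightarrow> real)"
    by (rule integrable_real_indicator) auto
  show ?thesis
  proof (rule Bochner_Integration.integrable_bound[OF _ _ AE_I2])
    show "integrable lborel (\<lambda>t. indicator {-1..1} t + k t + k (0 + (-1) * t))"
      by (intro Bochner_Integration.integrable_add k km ind)
    show "(\<lambda>t::real. (1 + t\<^sup>2) powr (- a)) \<in> borel_measurable lborel"
      by measurable
    fix t :: real
    have pos: "0 \<le> k t" "0 \<le> k (0 + (-1) * t)" "0 \<le> (indicator {-1..1} t :: real)"
      by (auto simp: k_def indicator_def)
    have le1: "(1 + t\<^sup>2) powr (- a) \<le> 1"
      using a powr_mono2'[of "-a" 1 "1 + t\<^sup>2"] by simp
    have tail: "(1 + t\<^sup>2) powr (- a) \<le> \<bar>t\<bar> powr (- 2 * a)" if "\<bar>t\<bar> \<ge> 1"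
    proof -
      have tp: "\<bar>t\<bar> > 0" using that by linarith
      have "(1 + t\<^sup>2) powr (- a) \<le> (t\<^sup>2) powr (- a)"
      proof (rule powr_mono2')
        show "0 < t\<^sup>2" using tp by simp
      qed (use a in auto)
      also have "(t\<^sup>2) powr (- a) = \<bar>t\<bar> powr (- 2 * a)"
      proof -
        have e: "t\<^sup>2 = \<bar>t\<bar> powr 2"
          using powr_realpow[OF tp, of 2] by simp
        have "(\<bar>t\<bar> powr 2) powr (- a) = \<bar>t\<bar> powr (- 2 * a)"
          by (simp only: powr_powr) simp
        then show ?thesis unfolding e .
      qed
      finally show ?thesis .
    qed
    have lhs0: "0 \<le> (1 + t\<^sup>2) powr (- a)" by simp
    have main: "(1 + t\<^sup>2) powr (- a) \<le> indicator {-1..1} t + k t + k (0 + (-1) * t)"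
    proof (cases "\<bar>t\<bar> \<le> 1")
      case True
      then have "indicator {-1..1} t = (1::real)" by (auto simp: indicator_def abs_le_iff)
      then show ?thesis using le1 pos by linarith
    next
      case False
      show ?thesis
      proof (cases "t \<ge> 1")
        case True
        then have "k t = \<bar>t\<bar> powr (- 2 * a)" by (simp add: k_def)
        then show ?thesis using tail False pos by linarith
      next
        case False2: False
        then have "t \<le> -1" using False by linarith
        then have "k (0 + (-1) * t) = \<bar>t\<bar> powr (- 2 * a)" by (simp add: k_def)
        then show ?thesis using tail False pos by linarith
      qed
    qed
    show "norm ((1 + t\<^sup>2) powr (- a)) \<le> norm (indicator {-1..1} t + k t + k (0 + (-1) * t))"
      using main lhs0 pos unfolding real_norm_def by linarith
  qed
qed



lemma integrable_prod_basis:
  fixes g :: "real \<Rightarrow> real"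
  assumes I: "integrable lborel g" and nn: "\<And>t. 0 \<le> g t"
  shows "integrable (lborel :: 'a::euclidean_space measure) (\<lambda>y. \<Prod>b\<in>Basis. g (y \<bullet> b))"
proof (rule integrableI_nonneg)
  have gm[measurable]: "g \<in> borel_measurable borel" using I by simp
  show "(\<lambda>y::'a. \<Prod>b\<in>Basis. g (y \<bullet> b)) \<in> borel_measurable lborel" by measurable
  show "AE y in lborel. 0 \<le> (\<Prod>b\<in>Basis. g (y \<bullet> b))" by (auto intro: prod_nonneg nn)
  have "(\<integral>\<^sup>+y. ennreal (\<Prod>b\<in>Basis. g (y \<bullet> b)) \<partial>(lborel::'a measure))
      = (\<integral>\<^sup>+y. (\<Prod>b\<in>Basis. ennreal (g (y \<bullet> b))) \<partial>(lborel::'a measure))"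
    by (simp add: prod_ennreal nn)
  also have "\<dots> = (\<Prod>b\<in>(Basis::'a set). (\<integral>\<^sup>+x. ennreal (g x) \<partial>lborel))"
    by (rule nn_integral_lborel_prod) auto
  also have "\<dots> < \<infinity>"
  proof -
    have "(\<integral>\<^sup>+x. ennreal (g x) \<partial>lborel) < \<infinity>"
      using I by (simp add: integrable_iff_bounded nn)
    then show ?thesis by (simp add: less_top[symmetric] power_eq_top_ennreal_iff)
  qed
  finally show "(\<integral>\<^sup>+y. ennreal (\<Prod>b\<in>Basis. g (y \<bullet> b)) \<partial>(lborel::'a measure)) < \<infinity>" .
qed



lemma integrable_poly_decay:
  fixes s :: real
  assumes s: "s > real DIM('a) / 2"
  shows "integrable (lborel :: 'a::euclidean_space measure) (\<lambda>y. (1 + (norm y)\<^sup>2) powr (- s))"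
proof -
  define n where "n = real DIM('a)"
  have n0: "n > 0" by (simp add: n_def)
  define a where "a = s / n"
  have a: "a > 1/2" using s n0 by (simp add: a_def n_def field_simps)
  have I: "integrable (lborel :: 'a measure) (\<lambda>y. \<Prod>b\<in>Basis. (1 + (y \<bullet> b)\<^sup>2) powr (- a))"
    by (rule integrable_prod_basis[OF integrable_1d[OF a]]) simp
  show ?thesis
  proof (rule Bochner_Integration.integrable_bound[OF I _ AE_I2])
    show "(\<lambda>y::'a. (1 + (norm y)\<^sup>2) powr (- s)) \<in> borel_measurable lborel" by measurable
    fix y :: 'a
    define X where "X = (1 + (norm y)\<^sup>2) powr (- a)"
    have X0: "0 \<le> X" by (simp add: X_def)
    have "(\<Prod>b\<in>(Basis::'a set). X) \<le> (\<Prod>b\<in>Basis. (1 + (y \<bullet> b)\<^sup>2) powr (- a))"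
    proof (rule prod_mono)
      fix b :: 'a assume b: "b \<in> Basis"
      have "(y \<bullet> b)\<^sup>2 \<le> (norm y)\<^sup>2"
      proof -
        have "\<bar>y \<bullet> b\<bar>\<^sup>2 \<le> (norm y)\<^sup>2"
          using Basis_le_norm[OF b, of y] by (intro power_mono) auto
        then show ?thesis by simp
      qed
      then have "X \<le> (1 + (y \<bullet> b)\<^sup>2) powr (- a)"
        unfolding X_def using a by (intro powr_mono2') (auto simp: add_pos_nonneg)
      then show "0 \<le> X \<and> X \<le> (1 + (y \<bullet> b)\<^sup>2) powr (- a)" using X0 by simp
    qed
    moreover have "(\<Prod>b\<in>(Basis::'a set). X) = (1 + (norm y)\<^sup>2) powr (- s)"
    proof -
      have "(\<Prod>b\<in>(Basis::'a set). X) = X ^ DIM('a)" by simp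
      also have "\<dots> = X powr n" unfolding n_def
        using X0 by (cases "X = 0") (auto simp: powr_realpow)
      also have "\<dots> = (1 + (norm y)\<^sup>2) powr (- s)"
        unfolding X_def using n0 by (simp add: powr_powr a_def)
      finally show ?thesis .
    qed
    ultimately show "norm ((1 + (norm y)\<^sup>2) powr (- s)) \<le> norm (\<Prod>b\<in>Basis. (1 + (y \<bullet> b)\<^sup>2) powr (- a))"
      by (simp add: prod_nonneg)
  qed
qed

lemma integrable_gauss:
  fixes c :: real
  assumes c: "c > 0"
  shows "integrable (lborel :: 'a::euclidean_space measure) (\<lambda>y. exp (- c * (norm y)\<^sup>2))"
proof -
  have i1: "integrable lborel (\<lambda>t::real. (1 + t\<^sup>2) powr (- 1))"
    by (rule integrable_1d) simp
  define K where "K = max 1 (1 / c)"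
  have g1: "integrable lborel (\<lambda>t::real. exp (- c * t\<^sup>2))"
  proof (rule Bochner_Integration.integrable_bound[OF integrable_mult_right[OF i1, of K] _ AE_I2])
    show "(\<lambda>t::real. exp (- c * t\<^sup>2)) \<in> borel_measurable lborel" by measurable
    fix t :: real
    have pos: "0 < 1 + t\<^sup>2" by (simp add: add_pos_nonneg)
    have "1 + c * t\<^sup>2 \<le> exp (c * t\<^sup>2)" by (rule exp_ge_add_one_self)
    moreover have "(1 + t\<^sup>2) \<le> K * (1 + c * t\<^sup>2)"
    proof -
      have "1 \<le> K" "1 / c \<le> K" by (auto simp: K_def)
      then have "t\<^sup>2 \<le> K * c * t\<^sup>2" using c
        by (metis divide_le_eq mult.commute mult_le_cancel_right1 zero_le_power2 mult_right_mono mult_1)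
      then show ?thesis using \<open>1 \<le> K\<close> by (simp add: algebra_simps)
    qed
    moreover have "K \<ge> 0" by (simp add: K_def)
    ultimately have "1 + t\<^sup>2 \<le> K * exp (c * t\<^sup>2)"
      by (meson mult_left_mono order_trans)
    then have "exp (- c * t\<^sup>2) \<le> K * (1 + t\<^sup>2) powr (- 1)"
      using pos by (simp add: powr_minus exp_minus field_simps)
    then show "norm (exp (- c * t\<^sup>2)) \<le> norm (K * (1 + t\<^sup>2) powr (- 1))"
      using pos by (simp add: K_def)
  qed
  have "integrable (lborel :: 'a measure) (\<lambda>y. \<Prod>b\<in>Basis. exp (- c * (y \<bullet> b)\<^sup>2))"
    by (rule integrable_prod_basis[OF g1]) simp
  moreover have "(\<Prod>b\<in>Basis. exp (- c * (y \<bullet> b)\<^sup>2)) = exp (- c * (norm y)\<^sup>2)" for y :: 'a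
  proof -
    have "(norm y)\<^sup>2 = (\<Sum>b\<in>Basis. (y \<bullet> b)\<^sup>2)"
      using euclidean_inner[of y y] by (simp add: power2_eq_square flip: power2_norm_eq_inner)
    then show ?thesis by (simp add: exp_sum[symmetric] sum_distrib_left)
  qed
  ultimately show ?thesis by simp
qed



lemma quad_expand:
  fixes A :: "real^'r^'r"
  assumes "qpsd A"
  shows "- (b \<bullet> (A *v b)) \<le> u \<bullet> (A *v u) - (1/2) * ((u + b) \<bullet> (A *v (u + b)))"
proof -
  have "0 \<le> (u - b) \<bullet> (A *v (u - b))" using assms unfolding qpsd_def by simp
  then show ?thesis
    by (simp add: matrix_vector_right_distrib matrix_vector_mult_diff_distrib inner_add_left
          inner_add_right inner_diff_left inner_diff_right algebra_simps)
qed

lemma kp_snd_Suc: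
  "snd (known_post Gam mu0 Lam0 Y (Suc k)) =
     matrix_inv (matrix_inv (snd (known_post Gam mu0 Lam0 Y k)) + matrix_inv Gam)"
  by (simp add: split_beta Let_def)

lemma kp_qpos:
  assumes G: "qpos Gam" and L: "qpos Lam0"
  shows "qpos (snd (known_post Gam mu0 Lam0 Y k))"
proof (induction k)
  case 0 then show ?case using L by simp
next
  case (Suc k)
  then show ?case unfolding kp_snd_Suc
    by (intro qpos_inv qpos_add qpos_inv qpos_psd G)
qed

lemma kp_inv_step:
  assumes G: "qpos Gam" and L: "qpos Lam0"
  shows "matrix_inv (snd (known_post Gam mu0 Lam0 Y (Suc k))) =
         matrix_inv (snd (known_post Gam mu0 Lam0 Y k)) + matrix_inv Gam"
  unfolding kp_snd_Suc
  by (intro inv_inv qpos_invertible qpos_add qpos_inv qpos_psd G kp_qpos L)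

lemma kp_inv_add:
  assumes G: "qpos Gam" and L: "qpos Lam0"
  shows "matrix_inv (snd (known_post Gam mu0 Lam0 Y (n + l))) =
         matrix_inv (snd (known_post Gam mu0 Lam0 Y n)) + real l *\<^sub>R matrix_inv Gam"
proof (induction l)
  case 0 then show ?case by simp
next
  case (Suc l)
  then show ?case using kp_inv_step[OF G L, of mu0 Y "n + l"]
    by (simp add: algebra_simps)
qed



lemma mv_cont[continuous_intros]:
  "continuous_on S f \<Longrightarrow> continuous_on S (\<lambda>x. (A::real^'n^'m) *v f x)"
  using continuous_on_compose[of S f "(*v) A"] matrix_vector_mult_linear_continuous_on[of "f ` S" A]
  by (simp add: o_def)

lemma const_pos:
  fixes Z :: "'a \<Rightarrow> 'b::euclidean_space"
  assumes P: "prob_space M" and D: "distributed M lborel Z (\<lambda>y. ennreal (\<phi> y))"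
    and eq: "\<And>y. \<phi> y = K * h y" and hpos: "\<And>y. h y > 0"
  shows "K > 0"
proof (rule ccontr)
  assume "\<not> K > 0"
  then have "\<And>y. \<phi> y \<le> 0" using eq hpos by (simp add: mult_nonpos_nonneg less_imp_le)
  then have z: "(\<lambda>y. ennreal (\<phi> y)) = (\<lambda>y. 0)" by (simp add: ennreal_eq_0_iff fun_eq_iff)
  have "distr M lborel Z = density lborel (\<lambda>y. 0)" using D z by (simp add: distributed_def)
  moreover have "prob_space (distr M lborel Z)"
    using D P by (intro prob_space.prob_space_distr) (auto simp: distributed_def)
  ultimately have "prob_space (density lborel (\<lambda>y::'b. 0))" by simp
  then have "emeasure (density lborel (\<lambda>y::'b. 0)) (space (density lborel (\<lambda>y::'b. 0))) = 1"
    by (rule prob_space.emeasure_space_1)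
  then show False by (simp add: emeasure_density)
qed

lemma gauss_eq:
  "gauss_density mu Sig y = ((2 * pi) powr (- real CARD('r) / 2) * det Sig powr (-1/2))
     * exp (- (1/2) * ((y - mu) \<bullet> (matrix_inv Sig *v (y - mu))))" for mu :: "real^'r::finite"
  by (simp add: gauss_density_def)

lemma kpd_eq: "known_post_density Gam mu0 Lam0 Y n y =
   gauss_density (fst (known_post Gam mu0 Lam0 Y n)) (snd (known_post Gam mu0 Lam0 Y n)) y"
  by (simp add: known_post_density_def split_beta)

lemma norm_sq_split: "(norm (y::'a::real_normed_vector))\<^sup>2 \<le> 2 * (norm (y - m))\<^sup>2 + 2 * (norm m)\<^sup>2"
proof -
  have "norm y \<le> norm (y - m) + norm m" by (metis diff_add_cancel norm_triangle_ineq)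
  then have "(norm y)\<^sup>2 \<le> (norm (y - m) + norm m)\<^sup>2" by (intro power_mono) auto
  also have "\<dots> \<le> 2 * (norm (y - m))\<^sup>2 + 2 * (norm m)\<^sup>2"
  proof -
    have "0 \<le> (norm (y - m) - norm m)\<^sup>2" by simp
    then show ?thesis by (simp only: power2_sum power2_diff)
  qed
  finally show ?thesis .
qed

lemma known_case:
  fixes xs :: "'r::finite \<Rightarrow> real^'d" and Y :: "nat \<Rightarrow> real^'r" and Z :: "'a \<Rightarrow> real^'r"
  assumes l: "l \<ge> 1" and G: "pos_def_mat Gam" and L: "pos_def_mat Lam0"
    and P: "prob_space M" and D: "distributed M lborel Z (known_post_density Gam mu0 Lam0 Y n)"
  shows "let p = (\<lambda>\<omega>. is_estimator (convex_vectors xs) (known_post_density Gam mu0 Lam0 Y n)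
                        (known_post_density Gam mu0 Lam0 Y (n + l)) (Z \<omega>))
        in integrable M p \<and>
           (\<integral>\<omega>. p \<omega> \<partial>M) = measure (density lborel (known_post_density Gam mu0 Lam0 Y (n + l)))
                                    (convex_vectors xs) \<and>
           integrable M (\<lambda>\<omega>. (p \<omega>)\<^sup>2)"
proof -
  have G': "qpos Gam" and L': "qpos Lam0" using G L by (auto intro: pos_def_qpos)
  define mu where "mu = fst (known_post Gam mu0 Lam0 Y n)"
  define Lam where "Lam = snd (known_post Gam mu0 Lam0 Y n)"
  define mu' where "mu' = fst (known_post Gam mu0 Lam0 Y (n + l))"
  define Lam' where "Lam' = snd (known_post Gam mu0 Lam0 Y (n + l))"
  define A where "A = matrix_inv Lam"
  define B where "B = real l *\<^sub>R matrix_inv Gam"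
  have A'eq: "matrix_inv Lam' = A + B"
    unfolding A_def B_def Lam_def Lam'_def by (rule kp_inv_add[OF G' L'])
  have Apsd: "qpsd A" unfolding A_def Lam_def by (intro qpos_psd qpos_inv kp_qpos G' L')
  have Bpos: "qpos B" unfolding B_def using l by (intro qpos_scale qpos_inv G') auto
  obtain \<delta> where \<delta>: "\<delta> > 0" "\<And>x. \<delta> * (norm x)\<^sup>2 \<le> x \<bullet> (B *v x)"
    using qpos_lower[OF Bpos] by blast
  define Kn where "Kn = (2 * pi) powr (- real CARD('r) / 2) * det Lam powr (-1/2)"
  define Kl where "Kl = (2 * pi) powr (- real CARD('r) / 2) * det Lam' powr (-1/2)"
  define Q where "Q = (\<lambda>y. (y - mu) \<bullet> (A *v (y - mu)))"
  define Q' where "Q' = (\<lambda>y. (y - mu') \<bullet> (matrix_inv Lam' *v (y - mu')))"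
  have phi: "known_post_density Gam mu0 Lam0 Y n y = Kn * exp (- (1/2) * Q y)" for y
    by (simp add: kpd_eq gauss_eq Kn_def Q_def A_def mu_def Lam_def)
  have psi: "known_post_density Gam mu0 Lam0 Y (n + l) y = Kl * exp (- (1/2) * Q' y)" for y
    by (simp add: kpd_eq gauss_eq Kl_def Q'_def mu'_def Lam'_def)
  have D': "distributed M lborel Z (\<lambda>y. ennreal (known_post_density Gam mu0 Lam0 Y n y))"
    using D by simp
  have Kn: "Kn > 0"
    by (rule const_pos[OF P D' phi]) simp
  have Kl: "Kl \<ge> 0" by (simp add: Kl_def)
  have phipos: "known_post_density Gam mu0 Lam0 Y n y > 0" for y
    using Kn by (simp add: phi)
  have cont: "continuous_on UNIV (\<lambda>y. gauss_density m S y)" for m S :: "_"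
    unfolding gauss_density_def by (intro continuous_intros)
  have psim: "known_post_density Gam mu0 Lam0 Y (n + l) \<in> borel_measurable borel"
    unfolding kpd_eq[abs_def] by (intro borel_measurable_continuous_onI cont)
  have phim: "known_post_density Gam mu0 Lam0 Y n \<in> borel_measurable borel"
    unfolding kpd_eq[abs_def] by (intro borel_measurable_continuous_onI cont)
  have psinn: "known_post_density Gam mu0 Lam0 Y (n + l) y \<ge> 0" for y
    using Kl by (simp add: psi)
  define b where "b = mu' - mu"
  define c0 where "c0 = b \<bullet> (A *v b) + \<delta> * (norm mu')\<^sup>2"
  have I: "integrable lborel (\<lambda>y. (known_post_density Gam mu0 Lam0 Y (n + l) y)\<^sup>2
                                    / known_post_density Gam mu0 Lam0 Y n y)"
  proof (rule Bochner_Integration.integrable_bound[OF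
        integrable_mult_right[OF integrable_gauss[of "\<delta>/2"], of "Kl\<^sup>2 / Kn * exp c0"] _ AE_I2])
    show "0 < \<delta> / 2" using \<delta> by simp
    show "(\<lambda>y. (known_post_density Gam mu0 Lam0 Y (n + l) y)\<^sup>2 / known_post_density Gam mu0 Lam0 Y n y)
          \<in> borel_measurable lborel" using psim phim by measurable
    fix y :: "real^'r"
    define u where "u = y - mu'"
    have ymu: "y - mu = u + b" by (simp add: u_def b_def)
    have e1: "(known_post_density Gam mu0 Lam0 Y (n + l) y)\<^sup>2 / known_post_density Gam mu0 Lam0 Y n y
        = Kl\<^sup>2 / Kn * exp (- Q' y + (1/2) * Q y)"
      unfolding phi psi using Kn by (simp add: power2_eq_square exp_add[symmetric] exp_diff field_simps)
    have "- Q' y + (1/2) * Q y = - (u \<bullet> (A *v u) - (1/2) * ((u + b) \<bullet> (A *v (u + b)))) - u \<bullet> (B *v u)"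
      unfolding Q'_def Q_def A'eq ymu u_def[symmetric]
      by (simp add: matrix_vector_mult_add_rdistrib inner_add_right)
    also have "\<dots> \<le> b \<bullet> (A *v b) - \<delta> * (norm u)\<^sup>2"
      using quad_expand[OF Apsd, of b u] \<delta>(2)[of u] by linarith
    also have "\<dots> \<le> c0 - \<delta> / 2 * (norm y)\<^sup>2"
    proof -
      have "\<delta> / 2 * (norm y)\<^sup>2 \<le> \<delta> / 2 * (2 * (norm (y - mu'))\<^sup>2 + 2 * (norm mu')\<^sup>2)"
        using norm_sq_split[of y mu'] \<delta>(1) by (intro mult_left_mono) auto
      then show ?thesis unfolding c0_def u_def by (simp add: algebra_simps)
    qed
    finally have ex: "- Q' y + (1/2) * Q y \<le> c0 + - (\<delta> / 2) * (norm y)\<^sup>2" by simp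
    have "Kl\<^sup>2 / Kn * exp (- Q' y + (1/2) * Q y) \<le> Kl\<^sup>2 / Kn * exp (c0 + - (\<delta> / 2) * (norm y)\<^sup>2)"
      using Kn ex by (intro mult_left_mono) auto
    also have "\<dots> = Kl\<^sup>2 / Kn * exp c0 * exp (- (\<delta> / 2) * (norm y)\<^sup>2)"
      by (simp only: exp_add mult.assoc)
    finally have le: "Kl\<^sup>2 / Kn * exp (- Q' y + (1/2) * Q y) \<le> Kl\<^sup>2 / Kn * exp c0 * exp (- (\<delta> / 2) * (norm y)\<^sup>2)" .
    have nn: "0 \<le> Kl\<^sup>2 / Kn * exp (- Q' y + (1/2) * Q y)" using Kn by simp
    show "norm ((known_post_density Gam mu0 Lam0 Y (n + l) y)\<^sup>2 / known_post_density Gam mu0 Lam0 Y n y)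
       \<le> norm (Kl\<^sup>2 / Kn * exp c0 * exp (- (\<delta> / 2) * (norm y)\<^sup>2))"
      unfolding e1 real_norm_def using le nn by linarith
  qed
  show ?thesis
    by (rule generic_est[OF P D' phipos convex_vectors_borel psim psinn I])
qed



lemma UP_ka: "fst (snd (unknown_post mu0 ka0 up0 Xi0 Y k)) = ka0 + real k"
  by (induction k) (simp_all add: split_beta Let_def)

lemma UP_up: "fst (snd (snd (unknown_post mu0 ka0 up0 Xi0 Y k))) = up0 + real k"
  by (induction k) (simp_all add: split_beta Let_def)

lemma UP_Xi:
  assumes X: "qpos Xi0" and k0: "ka0 > 0"
  shows "qpos (snd (snd (snd (unknown_post mu0 ka0 up0 Xi0 Y k))))"
proof (induction k)
  case 0 then show ?case using X by simp
next
  case (Suc k)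
  define ka where "ka = fst (snd (unknown_post mu0 ka0 up0 Xi0 Y k))"
  have ka: "ka > 0" using k0 by (simp add: ka_def UP_ka add_pos_nonneg)
  have "snd (snd (snd (unknown_post mu0 ka0 up0 Xi0 Y (Suc k)))) =
        snd (snd (snd (unknown_post mu0 ka0 up0 Xi0 Y k))) + (ka / (ka + 1)) *\<^sub>R
          outer_prod (Y (Suc k) - fst (unknown_post mu0 ka0 up0 Xi0 Y k))
                     (Y (Suc k) - fst (unknown_post mu0 ka0 up0 Xi0 Y k))"
    by (simp add: split_beta Let_def ka_def)
  then show ?case using Suc ka
    by (simp add: qpos_add qpsd_scale qpsd_outer less_imp_le)
qed

lemma upd_eq: "unknown_post_density mu0 ka0 up0 Xi0 Y n y =
   (let (mu, ka, up, Xi) = unknown_post mu0 ka0 up0 Xi0 Y n in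
    student_t_density (up - real CARD('r) + 1) mu
          ((1 / (ka * (up - real CARD('r) + 1))) *\<^sub>R Xi) y)" for y :: "real^'r::finite"
  by (simp add: unknown_post_density_def split_beta)

lemma one_plus_norm: "1 + (norm (a + m))\<^sup>2 \<le> 2 * (1 + (norm m)\<^sup>2) * (1 + (norm a)\<^sup>2)"
  for a m :: "'a::real_normed_vector"
proof -
  have "(norm (a + m))\<^sup>2 \<le> 2 * (norm a)\<^sup>2 + 2 * (norm m)\<^sup>2"
    using norm_sq_split[of "a + m" m] by simp
  moreover have "0 \<le> (norm m)\<^sup>2 * (norm a)\<^sup>2" by simp
  ultimately have "1 + (norm (a + m))\<^sup>2 \<le> 1 + (2 * (norm a)\<^sup>2 + (2 * (norm m)\<^sup>2 + 2 * ((norm m)\<^sup>2 * (norm a)\<^sup>2)))"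
    by linarith
  then show ?thesis by (simp add: algebra_simps)
qed

lemma t_eq:
  "student_t_density nu mu Sig y =
     (Gamma ((nu + real CARD('r)) / 2)
     / (Gamma (nu / 2) * (nu * pi) powr (real CARD('r) / 2) * det Sig powr (1/2)))
     * (1 + (1/nu) * ((y - mu) \<bullet> (matrix_inv Sig *v (y - mu)))) powr (- (nu + real CARD('r)) / 2)"
  for mu :: "real^'r::finite"
  by (simp add: student_t_density_def)



lemma max_aux: "0 \<le> t \<Longrightarrow> 1 + c * t \<le> max 1 c * (1 + (t::real))"
proof -
  assume t: "0 \<le> t"
  have "c * t \<le> max 1 c * t" using t by (intro mult_right_mono) auto
  moreover have "1 \<le> max 1 c" by simp
  ultimately show ?thesis by (simp add: distrib_left)
qed

lemma min_aux: "0 \<le> t \<Longrightarrow> min 1 c * (1 + t) \<le> 1 + c * (t::real)"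
proof -
  assume t: "0 \<le> t"
  have "min 1 c * t \<le> c * t" using t by (intro mult_right_mono) auto
  moreover have "min 1 c \<le> 1" by simp
  ultimately show ?thesis by (simp add: distrib_left)
qed

lemma ratio_bound:
  fixes y mu mu' :: "'a::real_normed_vector" and Q Q' nu nu' s CA \<delta> Kn Kl :: real
  assumes nu: "nu > 0" and nu': "nu' > 0" and Q0: "Q \<ge> 0"
    and Qle: "Q \<le> CA * (norm (y - mu))\<^sup>2" and CA: "CA > 0"
    and Q'ge: "\<delta> * (norm (y - mu'))\<^sup>2 \<le> Q'" and \<delta>: "\<delta> > 0"
    and Kn: "Kn > 0" and e: "e1 > 0" "e2 \<ge> 0"
  shows "(Kl * (1 + (1/nu') * Q') powr (- e1))\<^sup>2 / (Kn * (1 + (1/nu) * Q) powr (- e2))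
        \<le> Kl\<^sup>2 / Kn * (min 1 (\<delta> / nu') / (2 * (1 + (norm mu')\<^sup>2))) powr (- 2 * e1)
           * (max 1 (CA / nu) * (2 * (1 + (norm mu)\<^sup>2))) powr e2
           * (1 + (norm y)\<^sup>2) powr (- 2 * e1 + e2)"
proof -
  define W where "W = 1 + (norm y)\<^sup>2"
  have W: "W > 0" by (simp add: W_def add_pos_nonneg)
  define b where "b = 1 + (1/nu) * Q"
  define b' where "b' = 1 + (1/nu') * Q'"
  have Q'0: "Q' \<ge> 0" using Q'ge \<delta> by (smt (verit) mult_nonneg_nonneg zero_le_power2)
  have b1: "b \<ge> 1" using nu Q0 by (simp add: b_def)
  have b'1: "b' \<ge> 1" using nu' Q'0 by (simp add: b'_def)
  define K1 where "K1 = max 1 (CA / nu) * (2 * (1 + (norm mu)\<^sup>2))"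
  define k1 where "k1 = min 1 (\<delta> / nu') / (2 * (1 + (norm mu')\<^sup>2))"
  have k1: "k1 > 0" using \<delta> nu' by (simp add: k1_def add_pos_nonneg)
  have K1: "K1 > 0" by (simp add: K1_def add_pos_nonneg)
  have bK: "b \<le> K1 * W"
  proof -
    have "b \<le> 1 + (CA / nu) * (norm (y - mu))\<^sup>2"
      unfolding b_def using Qle nu by (simp add: divide_right_mono divide_le_cancel)
    also have "\<dots> \<le> max 1 (CA / nu) * (1 + (norm (y - mu))\<^sup>2)"
      by (rule max_aux) simp
    also have "\<dots> \<le> max 1 (CA / nu) * (2 * (1 + (norm mu)\<^sup>2) * W)"
      using one_plus_norm[of y "- mu"] unfolding W_def
      by (intro mult_left_mono) auto
    finally show ?thesis by (simp add: K1_def mult.assoc)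
  qed
  have bk: "k1 * W \<le> b'"
  proof -
    have "W \<le> 2 * (1 + (norm mu')\<^sup>2) * (1 + (norm (y - mu'))\<^sup>2)"
      using one_plus_norm[of "y - mu'" mu'] unfolding W_def by simp
    then have "k1 * W \<le> k1 * (2 * (1 + (norm mu')\<^sup>2) * (1 + (norm (y - mu'))\<^sup>2))"
      using k1 by (intro mult_left_mono) auto
    also have "\<dots> = min 1 (\<delta> / nu') * (1 + (norm (y - mu'))\<^sup>2)"
    proof -
      have "0 < 2 * (1 + (norm mu')\<^sup>2)" by (intro mult_pos_pos add_pos_nonneg) auto
      then have "2 * (1 + (norm mu')\<^sup>2) \<noteq> 0" by linarith
      then show ?thesis unfolding k1_def by simp
    qed
    also have "\<dots> \<le> 1 + (\<delta> / nu') * (norm (y - mu'))\<^sup>2"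
      by (rule min_aux) simp
    also have "\<dots> \<le> b'"
      unfolding b'_def using Q'ge nu' by (simp add: divide_right_mono)
    finally show ?thesis .
  qed
  have bpos: "b powr e2 > 0" using b1 by simp
  have "(Kl * b' powr (- e1))\<^sup>2 / (Kn * b powr (- e2)) = Kl\<^sup>2 / Kn * (b' powr (- 2 * e1) * b powr e2)"
    using b1 b'1 Kn
    by (simp add: power2_eq_square powr_minus_divide powr_add[symmetric] field_simps)
  also have "\<dots> \<le> Kl\<^sup>2 / Kn * ((k1 * W) powr (- 2 * e1) * (K1 * W) powr e2)"
  proof (intro mult_left_mono mult_mono)
    show "b' powr (- 2 * e1) \<le> (k1 * W) powr (- 2 * e1)"
      using e k1 W bk by (intro powr_mono2') auto
    show "b powr e2 \<le> (K1 * W) powr e2"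
      using e b1 bK by (intro powr_mono2) auto
  qed (use Kn in auto)
  also have "\<dots> = Kl\<^sup>2 / Kn * k1 powr (- 2 * e1) * K1 powr e2 * W powr (- 2 * e1 + e2)"
  proof -
    have "W powr (- 2 * e1) * W powr e2 = W powr (- 2 * e1 + e2)" by (rule powr_add[symmetric])
    then show ?thesis by (simp add: powr_mult mult_ac)
  qed
  finally show ?thesis unfolding b_def b'_def k1_def K1_def W_def .
qed



lemma mv_meas[measurable]: "f \<in> borel_measurable M \<Longrightarrow> (\<lambda>x. (A::real^'n^'m) *v f x) \<in> borel_measurable M"
  using measurable_compose[of f M borel "(*v) A" borel]
    borel_measurable_continuous_onI[OF matrix_vector_mult_linear_continuous_on[of UNIV A]]
  by simp

lemma unknown_case:
  fixes xs :: "'r::finite \<Rightarrow> real^'d" and Y :: "nat \<Rightarrow> real^'r" and Z :: "'b \<Rightarrow> real^'r"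
  assumes l: "l \<ge> 1" and k0: "ka0 > 0" and u0: "up0 > real CARD('r) - 1" and X: "pos_def_mat Xi0"
    and P: "prob_space M" and D: "distributed M lborel Z (unknown_post_density mu0 ka0 up0 Xi0 Y n)"
  shows "let p = (\<lambda>\<omega>. is_estimator (convex_vectors xs) (unknown_post_density mu0 ka0 up0 Xi0 Y n)
                        (unknown_post_density mu0 ka0 up0 Xi0 Y (n + l)) (Z \<omega>))
        in integrable M p \<and>
           (\<integral>\<omega>. p \<omega> \<partial>M) = measure (density lborel (unknown_post_density mu0 ka0 up0 Xi0 Y (n + l)))
                                    (convex_vectors xs) \<and>
           integrable M (\<lambda>\<omega>. (p \<omega>)\<^sup>2)"
proof -
  define r where "r = real CARD('r)"
  have X': "qpos Xi0" using X by (rule pos_def_qpos)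
  define mu where "mu = fst (unknown_post mu0 ka0 up0 Xi0 Y n)"
  define ka where "ka = fst (snd (unknown_post mu0 ka0 up0 Xi0 Y n))"
  define up where "up = fst (snd (snd (unknown_post mu0 ka0 up0 Xi0 Y n)))"
  define Xi where "Xi = snd (snd (snd (unknown_post mu0 ka0 up0 Xi0 Y n)))"
  define mu' where "mu' = fst (unknown_post mu0 ka0 up0 Xi0 Y (n + l))"
  define ka' where "ka' = fst (snd (unknown_post mu0 ka0 up0 Xi0 Y (n + l)))"
  define up' where "up' = fst (snd (snd (unknown_post mu0 ka0 up0 Xi0 Y (n + l))))"
  define Xi' where "Xi' = snd (snd (snd (unknown_post mu0 ka0 up0 Xi0 Y (n + l))))"
  define nu where "nu = up - r + 1"
  define nu' where "nu' = up' - r + 1"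
  have nu: "nu > 0" using u0 by (simp add: nu_def up_def UP_up r_def)
  have nu'eq: "nu' = nu + real l" by (simp add: nu_def nu'_def up_def up'_def UP_up)
  have nu': "nu' > 0" using nu nu'eq by simp
  have ka: "ka > 0" using k0 by (simp add: ka_def UP_ka add_pos_nonneg)
  have ka': "ka' > 0" using k0 by (simp add: ka'_def UP_ka add_pos_nonneg)
  define Sig where "Sig = (1 / (ka * nu)) *\<^sub>R Xi"
  define Sig' where "Sig' = (1 / (ka' * nu')) *\<^sub>R Xi'"
  have Sig: "qpos Sig" unfolding Sig_def Xi_def using ka nu
    by (intro qpos_scale UP_Xi X' k0) auto
  have Sig': "qpos Sig'" unfolding Sig'_def Xi'_def using ka' nu'
    by (intro qpos_scale UP_Xi X' k0) auto
  define A where "A = matrix_inv Sig"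
  define A' where "A' = matrix_inv Sig'"
  have A: "qpos A" unfolding A_def by (rule qpos_inv[OF Sig])
  have A': "qpos A'" unfolding A'_def by (rule qpos_inv[OF Sig'])
  define Kn where "Kn = Gamma ((nu + r) / 2) / (Gamma (nu / 2) * (nu * pi) powr (r / 2) * det Sig powr (1/2))"
  define Kl where "Kl = Gamma ((nu' + r) / 2) / (Gamma (nu' / 2) * (nu' * pi) powr (r / 2) * det Sig' powr (1/2))"
  define e2 where "e2 = (nu + r) / 2"
  define e1 where "e1 = (nu' + r) / 2"
  define Q where "Q = (\<lambda>y. (y - mu) \<bullet> (A *v (y - mu)))"
  define Q' where "Q' = (\<lambda>y. (y - mu') \<bullet> (A' *v (y - mu')))"
  have phi: "unknown_post_density mu0 ka0 up0 Xi0 Y n y = Kn * (1 + (1/nu) * Q y) powr (- e2)" for y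
    unfolding upd_eq t_eq
    by (simp add: split_beta Kn_def Q_def A_def Sig_def nu_def mu_def ka_def up_def Xi_def r_def e2_def
        minus_divide_left)
  have psi: "unknown_post_density mu0 ka0 up0 Xi0 Y (n + l) y = Kl * (1 + (1/nu') * Q' y) powr (- e1)" for y
    unfolding upd_eq t_eq
    by (simp add: split_beta Kl_def Q'_def A'_def Sig'_def nu'_def mu'_def ka'_def up'_def Xi'_def r_def e1_def
        minus_divide_left)
  have Q0: "Q y \<ge> 0" for y using A unfolding Q_def by (metis qpos_psd qpsd_def)
  have Q'0: "Q' y \<ge> 0" for y using A' unfolding Q'_def by (metis qpos_psd qpsd_def)
  have hpos: "(1 + (1/nu) * Q y) powr (- e2) > 0" for y
  proof -
    have "1 + (1/nu) * Q y > 0" using nu Q0[of y] by (simp add: add_pos_nonneg)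
    then show ?thesis by simp
  qed
  have D': "distributed M lborel Z (\<lambda>y. ennreal (unknown_post_density mu0 ka0 up0 Xi0 Y n y))"
    using D by simp
  have Kn: "Kn > 0" by (rule const_pos[OF P D' phi hpos])
  have Kl: "Kl \<ge> 0" unfolding Kl_def using nu'
    by (intro divide_nonneg_nonneg mult_nonneg_nonneg less_imp_le[OF Gamma_real_pos]) (auto simp: r_def)
  have phipos: "unknown_post_density mu0 ka0 up0 Xi0 Y n y > 0" for y
    using Kn hpos[of y] by (simp add: phi)
  have psim: "unknown_post_density mu0 ka0 up0 Xi0 Y (n + l) \<in> borel_measurable borel"
    unfolding psi[abs_def] Q'_def by measurable
  have phim: "unknown_post_density mu0 ka0 up0 Xi0 Y n \<in> borel_measurable borel"
    unfolding phi[abs_def] Q_def by measurable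
  have psinn: "unknown_post_density mu0 ka0 up0 Xi0 Y (n + l) y \<ge> 0" for y
    using Kl by (simp add: psi)
  obtain CA where CA: "CA > 0" "\<And>x. \<bar>x \<bullet> (A *v x)\<bar> \<le> CA * (norm x)\<^sup>2"
    using quad_upper[of A] by blast
  obtain \<delta> where \<delta>: "\<delta> > 0" "\<And>x. \<delta> * (norm x)\<^sup>2 \<le> x \<bullet> (A' *v x)"
    using qpos_lower[OF A'] by blast
  define s where "s = 2 * e1 - e2"
  have s: "s > real DIM(real^'r) / 2"
  proof -
    have "real l \<ge> 1" using l by simp
    moreover have "real DIM(real^'r) / 2 = r / 2" by (simp add: r_def)
    moreover have "s = nu / 2 + real l + r / 2" by (simp add: s_def e1_def e2_def nu'eq field_simps)
    ultimately show ?thesis using nu by linarith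
  qed
  define cc where "cc = Kl\<^sup>2 / Kn * (min 1 (\<delta> / nu') / (2 * (1 + (norm mu')\<^sup>2))) powr (- 2 * e1)
           * (max 1 (CA / nu) * (2 * (1 + (norm mu)\<^sup>2))) powr e2"
  have I: "integrable lborel (\<lambda>y. (unknown_post_density mu0 ka0 up0 Xi0 Y (n + l) y)\<^sup>2
                                    / unknown_post_density mu0 ka0 up0 Xi0 Y n y)"
  proof (rule Bochner_Integration.integrable_bound[OF
        integrable_mult_right[OF integrable_poly_decay[OF s], of cc] _ AE_I2])
    show "(\<lambda>y. (unknown_post_density mu0 ka0 up0 Xi0 Y (n + l) y)\<^sup>2 / unknown_post_density mu0 ka0 up0 Xi0 Y n y)
          \<in> borel_measurable lborel" using psim phim by measurable
    fix y :: "real^'r"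
    have b: "(Kl * (1 + (1/nu') * Q' y) powr (- e1))\<^sup>2 / (Kn * (1 + (1/nu) * Q y) powr (- e2))
        \<le> cc * (1 + (norm y)\<^sup>2) powr (- 2 * e1 + e2)"
      unfolding cc_def
    proof (rule ratio_bound[OF nu nu' Q0])
      show "Q y \<le> CA * (norm (y - mu))\<^sup>2" using CA(2)[of "y - mu"] unfolding Q_def by linarith
      show "\<delta> * (norm (y - mu'))\<^sup>2 \<le> Q' y" using \<delta>(2)[of "y - mu'"] unfolding Q'_def .
      show "0 < e1" using nu' by (simp add: e1_def r_def add_pos_nonneg)
      show "0 \<le> e2" using nu by (simp add: e2_def r_def)
    qed (use CA \<delta> Kn in auto)
    have nn: "0 \<le> (Kl * (1 + (1/nu') * Q' y) powr (- e1))\<^sup>2 / (Kn * (1 + (1/nu) * Q y) powr (- e2))"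
      using Kn hpos[of y] by simp
    show "norm ((unknown_post_density mu0 ka0 up0 Xi0 Y (n + l) y)\<^sup>2 / unknown_post_density mu0 ka0 up0 Xi0 Y n y)
       \<le> norm (cc * (1 + (norm y)\<^sup>2) powr (- s))"
      unfolding phi psi real_norm_def using b nn by (simp add: s_def)
  qed
  show ?thesis
    by (rule generic_est[OF P D' phipos convex_vectors_borel psim psinn I])
qed



theorem theorem2:
  fixes xs :: "'r::finite \<Rightarrow> real^'d"
    and Y :: "nat \<Rightarrow> real^'r"
    and n l :: nat
  assumes "l \<ge> 1"
  shows
   "(\<forall>(Gam::real^'r^'r) mu0 Lam0 (M::'a measure) (Z::'a \<Rightarrow> real^'r).
       pos_def_mat Gam \<and> pos_def_mat Lam0 \<and> prob_space M \<and>
       distributed M lborel Z (known_post_density Gam mu0 Lam0 Y n) \<longrightarrow>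
       (let p = (\<lambda>\<omega>. is_estimator (convex_vectors xs) (known_post_density Gam mu0 Lam0 Y n)
                        (known_post_density Gam mu0 Lam0 Y (n + l)) (Z \<omega>))
        in integrable M p \<and>
           (\<integral>\<omega>. p \<omega> \<partial>M) = measure (density lborel (known_post_density Gam mu0 Lam0 Y (n + l)))
                                    (convex_vectors xs) \<and>
           integrable M (\<lambda>\<omega>. (p \<omega>)\<^sup>2)))
  \<and>
    (\<forall>mu0 ka0 up0 (Xi0::real^'r^'r) (M::'b measure) (Z::'b \<Rightarrow> real^'r).
       ka0 > 0 \<and> up0 > real CARD('r) - 1 \<and> pos_def_mat Xi0 \<and> prob_space M \<and>
       distributed M lborel Z (unknown_post_density mu0 ka0 up0 Xi0 Y n) \<longrightarrow>
       (let p = (\<lambda>\<omega>. is_estimator (convex_vectors xs) (unknown_post_density mu0 ka0 up0 Xi0 Y n)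
                        (unknown_post_density mu0 ka0 up0 Xi0 Y (n + l)) (Z \<omega>))
        in integrable M p \<and>
           (\<integral>\<omega>. p \<omega> \<partial>M) = measure (density lborel (unknown_post_density mu0 ka0 up0 Xi0 Y (n + l)))
                                    (convex_vectors xs) \<and>
           integrable M (\<lambda>\<omega>. (p \<omega>)\<^sup>2)))"
proof (intro conjI allI impI)
  fix Gam :: "real^'r^'r" and mu0 Lam0 and M :: "'a measure" and Z :: "'a \<Rightarrow> real^'r"
  assume h: "pos_def_mat Gam \<and> pos_def_mat Lam0 \<and> prob_space M \<and>
       distributed M lborel Z (known_post_density Gam mu0 Lam0 Y n)"
  then show "let p = (\<lambda>\<omega>. is_estimator (convex_vectors xs) (known_post_density Gam mu0 Lam0 Y n)
                        (known_post_density Gam mu0 Lam0 Y (n + l)) (Z \<omega>))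
        in integrable M p \<and>
           (\<integral>\<omega>. p \<omega> \<partial>M) = measure (density lborel (known_post_density Gam mu0 Lam0 Y (n + l)))
                                    (convex_vectors xs) \<and>
           integrable M (\<lambda>\<omega>. (p \<omega>)\<^sup>2)"
    using assms by (intro known_case) auto
next
  fix mu0 ka0 up0 and Xi0 :: "real^'r^'r" and M :: "'b measure" and Z :: "'b \<Rightarrow> real^'r"
  assume h: "ka0 > 0 \<and> up0 > real CARD('r) - 1 \<and> pos_def_mat Xi0 \<and> prob_space M \<and>
       distributed M lborel Z (unknown_post_density mu0 ka0 up0 Xi0 Y n)"
  then show "let p = (\<lambda>\<omega>. is_estimator (convex_vectors xs) (unknown_post_density mu0 ka0 up0 Xi0 Y n)
                        (unknown_post_density mu0 ka0 up0 Xi0 Y (n + l)) (Z \<omega>))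
        in integrable M p \<and>
           (\<integral>\<omega>. p \<omega> \<partial>M) = measure (density lborel (unknown_post_density mu0 ka0 up0 Xi0 Y (n + l)))
                                    (convex_vectors xs) \<and>
           integrable M (\<lambda>\<omega>. (p \<omega>)\<^sup>2)"
    using assms by (intro unknown_case) auto
qed

end
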